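(* Let $X=\{x_1,\ldots,x_n\}$ be a configuration of distinct points in a real Euclidean affine space, $s_{ij}=\overrightarrow{x_ix_j}^2$, and let $\mathcal{B}(X)=(s_{ij})_{1\le i,j\le n}$ (with zero diagonal) and $\mathcal{C}(X)=\begin{pmatrix}0&\mathbf{1}^T\\ \mathbf{1}&\mathcal{B}(X)\end{pmatrix}$, where $\mathbf{1}=(1,\ldots,1)^T\in\mathbb{R}^n$. Let $\mu_0^{-1}(0)=\{W\in\mathbb{R}^n:\mathbf{1}^TW=0\}$. Then $\ker\mathcal{B}(X)\cap\mu_0^{-1}(0)\subseteq\mathbb{W}_0(X)$, and $\mathbb{W}_0(X)$ is isomorphic to $\ker\mathcal{C}(X)$ via $W=(w_1,\ldots,w_n)\mapsto(w_0,w_1,\ldots,w_n)$ with $w_0=-\sum_{j=1}^n w_js_{ij}$ (independent of $i$). Moreover $\ker\mathcal{B}(X)\cap\mu_0^{-1}(0)=\mathbb{W}_0(X)$ if and only if every weighted system $(X,w)$ with $\mu_0=0$ and $\mu_1=\overrightarrow{O}$ also has $\mu_2=0$; these conditions are fulfilled if $X$ is co-spherical.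
   Context: For a weight function $w$ on $X$ (identified with $(w_1,\ldots,w_n)$), $\mu_0=\sum_j w_j$, $\mu_1(p)=\sum_j w_j\overrightarrow{px_j}$ and $\mu_2(p)=\sum_jw_j\overrightarrow{px_j}^2$ for points $p$. $\mathbb{W}_0(X)$ is the space of weight vectors with $\mu_1$ identically zero. $X$ is co-spherical if some point is equidistant from all points of $X$. *)

theory Defs
  imports "HOL-Analysis.Analysis"
begin

text \<open>A configuration X = {x_1,...,x_n} is a map x :: 'n \<Rightarrow> 'a from a finite index type
  into a Euclidean space; weight vectors are elements of real^'n.\<close>

definition mu0 :: "real^'n \<Rightarrow> real" where
  "mu0 w = (\<Sum>j\<in>UNIV. w $ j)"

definition mu1 :: "('n::finite \<Rightarrow> 'a::euclidean_space) \<Rightarrow> real^'n \<Rightarrow> 'a \<Rightarrow> 'a" where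
  "mu1 x w p = (\<Sum>j\<in>UNIV. (w $ j) *\<^sub>R (x j - p))"

definition mu2 :: "('n::finite \<Rightarrow> 'a::euclidean_space) \<Rightarrow> real^'n \<Rightarrow> 'a \<Rightarrow> real" where
  "mu2 x w p = (\<Sum>j\<in>UNIV. (w $ j) * (norm (x j - p))\<^sup>2)"

definition W0 :: "('n::finite \<Rightarrow> 'a::euclidean_space) \<Rightarrow> (real^'n) set" where
  "W0 x = {w. \<forall>p. mu1 x w p = 0}"

definition sqd :: "('n::finite \<Rightarrow> 'a::euclidean_space) \<Rightarrow> 'n \<Rightarrow> 'n \<Rightarrow> real" where
  "sqd x i j = (norm (x j - x i))\<^sup>2"

definition Bmat :: "('n::finite \<Rightarrow> 'a::euclidean_space) \<Rightarrow> real^'n^'n" where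
  "Bmat x = (\<chi> i j. sqd x i j)"

text \<open>Index None plays the role of row/column 0.\<close>
definition Cmat :: "('n::finite \<Rightarrow> 'a::euclidean_space) \<Rightarrow> real^('n option)^('n option)" where
  "Cmat x = (\<chi> r c. (case (r, c) of
       (None, None) \<Rightarrow> 0
     | (None, Some _) \<Rightarrow> 1
     | (Some _, None) \<Rightarrow> 1
     | (Some i, Some j) \<Rightarrow> sqd x i j))"

definition wext :: "('n::finite \<Rightarrow> 'a::euclidean_space) \<Rightarrow> 'n \<Rightarrow> real^'n \<Rightarrow> real^('n option)" where
  "wext x i w = (\<chi> k. (case k of
       None \<Rightarrow> - (\<Sum>j\<in>UNIV. (w $ j) * sqd x i j)
     | Some j \<Rightarrow> w $ j))"

definition cospherical :: "('n \<Rightarrow> 'a::real_normed_vector) \<Rightarrow> bool" where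
  "cospherical x = (\<exists>c r. \<forall>j. dist c (x j) = r)"

end

theory Submission
  imports Defs
begin

definition msum :: "('n::finite \<Rightarrow> 'a::euclidean_space) \<Rightarrow> real^'n \<Rightarrow> 'a" where
  "msum x w = (\<Sum>j\<in>UNIV. (w $ j) *\<^sub>R x j)"

definition qsum :: "('n::finite \<Rightarrow> 'a::euclidean_space) \<Rightarrow> real^'n \<Rightarrow> real" where
  "qsum x w = (\<Sum>j\<in>UNIV. (w $ j) * (norm (x j))\<^sup>2)"

lemma mu1_eq: "mu1 x w p = msum x w - mu0 w *\<^sub>R p"
  unfolding mu1_def msum_def mu0_def
  by (simp add: scaleR_diff_right sum_subtractf scaleR_sum_left)

lemma mu2_eq: "mu2 x w p = qsum x w - 2 * (p \<bullet> msum x w) + mu0 w * (norm p)\<^sup>2"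
proof -
  have "mu2 x w p = (\<Sum>j\<in>UNIV. (w $ j) * (norm (x j))\<^sup>2 - 2 * (w $ j * (p \<bullet> x j)) + w $ j * (norm p)\<^sup>2)"
    unfolding mu2_def
    by (intro sum.cong refl) (simp add: power2_norm_eq_inner inner_diff algebra_simps inner_commute)
  also have "\<dots> = qsum x w - 2 * (\<Sum>j\<in>UNIV. w $ j * (p \<bullet> x j)) + mu0 w * (norm p)\<^sup>2"
    unfolding qsum_def mu0_def
    by (simp add: sum.distrib sum_subtractf sum_distrib_left sum_distrib_right)
  also have "(\<Sum>j\<in>UNIV. w $ j * (p \<bullet> x j)) = p \<bullet> msum x w"
    unfolding msum_def by (simp add: inner_sum_right)
  finally show ?thesis .
qed

lemma W0_iff: fixes x :: "'n::finite \<Rightarrow> 'a::euclidean_space" shows "w \<in> W0 x \<longleftrightarrow> mu0 w = 0 \<and> msum x w = 0"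
proof
  assume "w \<in> W0 x"
  hence h: "\<And>p. mu1 x w p = 0" by (simp add: W0_def)
  have m: "msum x w = 0" using h[of 0] by (simp add: mu1_eq)
  obtain b :: 'a where b: "b \<in> Basis" using nonempty_Basis by blast
  hence "b \<noteq> 0" by auto
  moreover have "mu0 w *\<^sub>R b = 0" using h[of b] m by (simp add: mu1_eq)
  ultimately show "mu0 w = 0 \<and> msum x w = 0" using m by simp
qed (simp add: W0_def mu1_eq)

lemma Bmat_apply: "(Bmat x *v w) $ i = mu2 x w (x i)"
  unfolding Bmat_def matrix_vector_mult_def mu2_def sqd_def by (simp add: mult.commute)

lemma sum_sqd: "(\<Sum>j\<in>UNIV. (w $ j) * sqd x i j) = mu2 x w (x i)"
  unfolding mu2_def sqd_def by simp

lemma key: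
  assumes "mu0 w = 0" "\<And>i. mu2 x w (x i) = K"
  shows "msum x w = 0"
proof -
  have "(\<Sum>i\<in>UNIV. w $ i * mu2 x w (x i)) = 0"
    using assms by (simp add: mu0_def flip: sum_distrib_right)
  moreover have "(\<Sum>i\<in>UNIV. w $ i * mu2 x w (x i)) = (\<Sum>i\<in>UNIV. w $ i * qsum x w - 2 * (w $ i * (x i \<bullet> msum x w)))"
    using assms(1) by (intro sum.cong refl) (simp add: mu2_eq algebra_simps)
  moreover have "\<dots> = - 2 * (msum x w \<bullet> msum x w)"
    using assms(1)
    by (simp add: sum_subtractf mu0_def msum_def inner_sum_left sum_distrib_left sum_negf
         flip: sum_distrib_right)
  ultimately show ?thesis by simp
qed

lemma sum_option: "sum f (UNIV :: 'n::finite option set) = f None + (\<Sum>j\<in>UNIV. f (Some j))"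
proof -
  have "sum f (UNIV :: 'n option set) = sum f (insert None (range Some))"
    by (simp add: UNIV_option_conv)
  also have "\<dots> = f None + sum f (range Some)" by (subst sum.insert) auto
  also have "sum f (range Some) = (\<Sum>j\<in>UNIV. f (Some j))"
    by (subst sum.reindex) auto
  finally show ?thesis .
qed

lemma Cmat_None: "(Cmat x *v v) $ None = (\<Sum>j\<in>UNIV. v $ Some j)"
  unfolding Cmat_def matrix_vector_mult_def by (simp add: sum_option)

lemma Cmat_Some: "(Cmat x *v v) $ Some i = v $ None + (\<Sum>j\<in>UNIV. sqd x i j * v $ Some j)"
  unfolding Cmat_def matrix_vector_mult_def by (simp add: sum_option)

theorem theoremA2p1:
  fixes x :: "'n::finite \<Rightarrow> 'a::euclidean_space"
  assumes "inj x"
  shows "{w. Bmat x *v w = 0 \<and> mu0 w = 0} \<subseteq> W0 x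
    \<and> (\<forall>w\<in>W0 x. \<forall>i i'. (\<Sum>j\<in>UNIV. (w $ j) * sqd x i j) = (\<Sum>j\<in>UNIV. (w $ j) * sqd x i' j))
    \<and> (\<forall>i. linear (wext x i) \<and> bij_betw (wext x i) (W0 x) {v. Cmat x *v v = 0})
    \<and> (({w. Bmat x *v w = 0 \<and> mu0 w = 0} = W0 x) \<longleftrightarrow>
         (\<forall>w. mu0 w = 0 \<and> (\<forall>p. mu1 x w p = 0) \<longrightarrow> (\<forall>p. mu2 x w p = 0)))
    \<and> (cospherical x \<longrightarrow> {w. Bmat x *v w = 0 \<and> mu0 w = 0} = W0 x)"
proof -
  have W0mu2: "mu2 x w p = qsum x w" if "w \<in> W0 x" for w p
    using that by (simp add: W0_iff mu2_eq)
  have P1: "{w. Bmat x *v w = 0 \<and> mu0 w = 0} \<subseteq> W0 x"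
  proof
    fix w assume "w \<in> {w. Bmat x *v w = 0 \<and> mu0 w = 0}"
    hence h: "Bmat x *v w = 0" "mu0 w = 0" by auto
    have "\<And>i. mu2 x w (x i) = 0" using h(1) by (metis Bmat_apply zero_index)
    from key[OF h(2) this] h(2) show "w \<in> W0 x" by (simp add: W0_iff)
  qed
  have P2: "\<forall>w\<in>W0 x. \<forall>i i'. (\<Sum>j\<in>UNIV. (w $ j) * sqd x i j) = (\<Sum>j\<in>UNIV. (w $ j) * sqd x i' j)"
    by (simp add: sum_sqd W0mu2)
  have P3: "linear (wext x i) \<and> bij_betw (wext x i) (W0 x) {v. Cmat x *v v = 0}" for i
  proof
    show "linear (wext x i)"
      unfolding wext_def
      by (rule linearI) (auto simp: vec_eq_iff sum.distrib sum_distrib_left algebra_simps split: option.splits)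
    show "bij_betw (wext x i) (W0 x) {v. Cmat x *v v = 0}"
      unfolding bij_betw_def
    proof (intro conjI)
      show "inj_on (wext x i) (W0 x)"
      proof (rule inj_onI)
        fix u v assume "wext x i u = wext x i v"
        hence "\<And>j. wext x i u $ Some j = wext x i v $ Some j" by simp
        thus "u = v" by (simp add: wext_def vec_eq_iff)
      qed
      show "wext x i ` W0 x = {v. Cmat x *v v = 0}"
      proof
        show "wext x i ` W0 x \<subseteq> {v. Cmat x *v v = 0}"
        proof clarify
          fix w assume w: "w \<in> W0 x"
          show "Cmat x *v wext x i w = 0"
          proof (subst vec_eq_iff, rule allI)
            fix k show "(Cmat x *v wext x i w) $ k = 0 $ k"
            proof (cases k)
              case None thus ?thesis using w
                by (simp add: Cmat_None wext_def W0_iff mu0_def)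
            next
              case (Some i')
              have "(Cmat x *v wext x i w) $ k = - mu2 x w (x i) + mu2 x w (x i')"
                using Some by (simp add: Cmat_Some wext_def sum_sqd mult.commute flip: sum_sqd)
              thus ?thesis using w by (simp add: W0mu2)
            qed
          qed
        qed
        show "{v. Cmat x *v v = 0} \<subseteq> wext x i ` W0 x"
        proof clarify
          fix v assume v: "Cmat x *v v = 0"
          define w :: "real^'n" where "w = (\<chi> j. v $ Some j)"
          have m0: "mu0 w = 0" using arg_cong[OF v, of "\<lambda>u. u $ None"]
            by (simp add: Cmat_None w_def mu0_def)
          have c: "mu2 x w (x i') = - v $ None" for i'
            using arg_cong[OF v, of "\<lambda>u. u $ Some i'"]
            by (simp add: Cmat_Some w_def mult.commute flip: sum_sqd)
          have wW: "w \<in> W0 x" using key[OF m0 c] m0 by (simp add: W0_iff)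
          have "- (\<Sum>j\<in>UNIV. (w $ j) * sqd x i j) = v $ None"
            by (simp add: sum_sqd c)
          hence "wext x i w = v"
            by (simp add: vec_eq_iff wext_def w_def split: option.splits)
          thus "v \<in> wext x i ` W0 x" using wW by blast
        qed
      qed
    qed
  qed
  have W0alt: "w \<in> W0 x \<longleftrightarrow> mu0 w = 0 \<and> (\<forall>p. mu1 x w p = 0)" for w
    using W0_iff[of w x] by (auto simp: W0_def)
  have P4: "({w. Bmat x *v w = 0 \<and> mu0 w = 0} = W0 x) \<longleftrightarrow>
         (\<forall>w. mu0 w = 0 \<and> (\<forall>p. mu1 x w p = 0) \<longrightarrow> (\<forall>p. mu2 x w p = 0))"
  proof
    assume eq: "{w. Bmat x *v w = 0 \<and> mu0 w = 0} = W0 x"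
    show "\<forall>w. mu0 w = 0 \<and> (\<forall>p. mu1 x w p = 0) \<longrightarrow> (\<forall>p. mu2 x w p = 0)"
    proof (intro allI impI)
      fix w p assume "mu0 w = 0 \<and> (\<forall>p. mu1 x w p = 0)"
      hence w: "w \<in> W0 x" by (simp add: W0alt)
      hence "Bmat x *v w = 0" using eq by blast
      hence "mu2 x w (x undefined) = 0" by (metis Bmat_apply zero_index)
      thus "mu2 x w p = 0" using w W0mu2 by metis
    qed
  next
    assume h: "\<forall>w. mu0 w = 0 \<and> (\<forall>p. mu1 x w p = 0) \<longrightarrow> (\<forall>p. mu2 x w p = 0)"
    show "{w. Bmat x *v w = 0 \<and> mu0 w = 0} = W0 x"
    proof
      show "W0 x \<subseteq> {w. Bmat x *v w = 0 \<and> mu0 w = 0}"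
      proof
        fix w assume w: "w \<in> W0 x"
        hence "\<forall>p. mu2 x w p = 0" using h W0alt by blast
        hence "Bmat x *v w = 0" by (simp add: vec_eq_iff Bmat_apply)
        thus "w \<in> {w. Bmat x *v w = 0 \<and> mu0 w = 0}" using w W0alt by blast
      qed
    qed (rule P1)
  qed
  have P5: "cospherical x \<longrightarrow> {w. Bmat x *v w = 0 \<and> mu0 w = 0} = W0 x"
  proof
    assume "cospherical x"
    then obtain c r where cr: "\<And>j. dist c (x j) = r" unfolding cospherical_def by blast
    have "\<forall>w. mu0 w = 0 \<and> (\<forall>p. mu1 x w p = 0) \<longrightarrow> (\<forall>p. mu2 x w p = 0)"
    proof (intro allI impI)
      fix w p assume "mu0 w = 0 \<and> (\<forall>p. mu1 x w p = 0)"
      hence w: "w \<in> W0 x" and m0: "mu0 w = 0" by (simp_all add: W0alt)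
      have "mu2 x w c = (\<Sum>j\<in>UNIV. w $ j * r\<^sup>2)"
        unfolding mu2_def using cr by (simp add: dist_norm norm_minus_commute)
      also have "\<dots> = 0" using m0 by (simp add: mu0_def flip: sum_distrib_right)
      finally show "mu2 x w p = 0" using w W0mu2 by metis
    qed
    thus "{w. Bmat x *v w = 0 \<and> mu0 w = 0} = W0 x" using P4 by blast
  qed
  show ?thesis using P1 P2 P3 P4 P5 by blast
qed

end
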